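(* Let $\mathbb G=V_1\times V_2$ and $\mathbb G'=V_1'\times V_2'$ be step-two Carnot groups. Then $\mathcal A_h(\mathbb G)=\mathcal A(V_1\times V_2)$ and $\mathcal A_h(\mathbb G')=\mathcal A(V_1'\times V_2')$ if and only if $\mathcal A_h(\mathbb G\times\mathbb G')=\mathcal A((V_1\oplus V_1')\times(V_2\oplus V_2'))$.
   Context: A step-two Carnot group is $\mathbb G=V_1\times V_2$ ($V_1,V_2$ finite-dimensional real vector spaces, $V_2\ne\{0\}$) with a bilinear skew-symmetric $[\cdot,\cdot]:V_1\times V_1\to V_2$ whose image spans $V_2$, and group law $(x,z)\cdot(x',z')=(x+x',z+z'+[x,x'])$. $\mathcal A_h(\mathbb G)$ is the space of maps $f:\mathbb G\to\mathbb R$ such that for all $(x,z)\in\mathbb G$, $y\in V_1$, $t\mapsto f((x,z)\cdot(ty,0))$ is affine; $\mathcal A(W)$ is the space of maps affine in the usual sense on a vector space $W$. The direct product $\mathbb G\times\mathbb G'$ is $(V_1\oplus V_1')\times(V_2\oplus V_2')$ with bracket $[x+x',y+y']:=[x,y]+[x',y']'$ for $x,y\in V_1$, $x',y'\in V_1'$. *)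

theory Defs
  imports "HOL-Analysis.Analysis"
begin

text \<open>Finite-dimensional real vector spaces are modelled as types of class euclidean_space.
A step-two Carnot group structure on V1 x V2 is given by its bracket.\<close>

definition step2_bracket :: "('a::euclidean_space \<Rightarrow> 'a \<Rightarrow> 'b::euclidean_space) \<Rightarrow> bool" where
  "step2_bracket br \<longleftrightarrow> bilinear br \<and> (\<forall>x y. br y x = - br x y)
     \<and> span (range (\<lambda>(x, y). br x y)) = UNIV \<and> (UNIV :: 'b set) \<noteq> {0}"

definition carnot_mult ::
  "('a::euclidean_space \<Rightarrow> 'a \<Rightarrow> 'b::euclidean_space) \<Rightarrow> ('a \<times> 'b) \<Rightarrow> ('a \<times> 'b) \<Rightarrow> ('a \<times> 'b)" where
  "carnot_mult br p q = (fst p + fst q, snd p + snd q + br (fst p) (fst q))"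

definition affine_map :: "('v::real_vector \<Rightarrow> real) \<Rightarrow> bool" where
  "affine_map f \<longleftrightarrow> (\<exists>g c. linear g \<and> (\<forall>x. f x = g x + c))"

definition horiz_affine ::
  "('a::euclidean_space \<Rightarrow> 'a \<Rightarrow> 'b::euclidean_space) \<Rightarrow> (('a \<times> 'b) \<Rightarrow> real) set" where
  "horiz_affine br = {f. \<forall>p y. affine_map (\<lambda>t::real. f (carnot_mult br p (t *\<^sub>R y, 0)))}"

definition prod_bracket ::
  "('a::euclidean_space \<Rightarrow> 'a \<Rightarrow> 'b::euclidean_space) \<Rightarrow> ('c::euclidean_space \<Rightarrow> 'c \<Rightarrow> 'd::euclidean_space)
    \<Rightarrow> ('a \<times> 'c) \<Rightarrow> ('a \<times> 'c) \<Rightarrow> ('b \<times> 'd)" where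
  "prod_bracket br br' u v = (br (fst u) (fst v), br' (snd u) (snd v))"

end

theory Submission
  imports Defs
begin

lemma lin_scale: "linear f \<Longrightarrow> f (c *\<^sub>R x) = c *\<^sub>R f x"
  by (simp add: linear_iff)

lemma lin_add: "linear f \<Longrightarrow> f (x + y) = f x + f y"
  by (simp add: linear_iff)

lemma mid_affine:
  fixes f :: "'v::real_vector \<Rightarrow> real"
  assumes "affine_map f"
  shows "f (u + v) + f (u - v) = 2 * f u"
proof -
  obtain g c where g: "linear g" "\<And>x. f x = g x + c"
    using assms unfolding affine_map_def by blast
  have "g (u - v) = g u - g v" using g(1) by (simp add: linear_diff)
  then show ?thesis using g by (simp add: lin_add)
qed

lemma affine_imp_horiz:
  fixes br :: "'a::euclidean_space \<Rightarrow> 'a \<Rightarrow> 'b::euclidean_space"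
  assumes lb: "\<And>x. linear (br x)" and f: "affine_map f"
  shows "f \<in> horiz_affine br"
  unfolding horiz_affine_def
proof (intro CollectI allI)
  fix p :: "'a \<times> 'b" and y :: 'a
  obtain g c where g: "linear g" "\<And>x. f x = g x + c"
    using f unfolding affine_map_def by blast
  have eq: "carnot_mult br p (t *\<^sub>R y, 0) = p + t *\<^sub>R (y, br (fst p) y)" for t
    by (cases p) (simp add: carnot_mult_def lin_scale[OF lb])
  have "f (carnot_mult br p (t *\<^sub>R y, 0)) = t * g (y, br (fst p) y) + (g p + c)" for t
    unfolding eq g(2) using g(1) lin_scale[OF g(1), of t "(y, br (fst p) y)"] by (simp add: lin_add)
  moreover have "linear (\<lambda>t::real. t * g (y, br (fst p) y))"
    by (simp add: linear_iff algebra_simps)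
  ultimately show "affine_map (\<lambda>t. f (carnot_mult br p (t *\<^sub>R y, 0)))"
    unfolding affine_map_def by blast
qed

lemma sep_bilinear:
  fixes F2 :: "'p::real_vector \<Rightarrow> 'q::real_vector \<Rightarrow> real"
  assumes A1: "\<And>q. affine_map (\<lambda>p. F2 p q)" and A2: "\<And>p. affine_map (\<lambda>q. F2 p q)"
  shows "bilinear (\<lambda>p q. F2 p q - F2 p 0 - F2 0 q + F2 0 0)"
  unfolding bilinear_def
proof (intro conjI allI)
  fix p
  obtain g c where g: "linear g" "\<And>x. F2 p x = g x + c"
    using A2[of p] unfolding affine_map_def by blast
  obtain g' c' where g': "linear g'" "\<And>x. F2 0 x = g' x + c'"
    using A2[of 0] unfolding affine_map_def by blast
  have "(\<lambda>q. F2 p q - F2 p 0 - F2 0 q + F2 0 0) = (\<lambda>q. g q - g' q)"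
    using g g' by (simp add: linear_0)
  then show "linear (\<lambda>q. F2 p q - F2 p 0 - F2 0 q + F2 0 0)"
    using g(1) g'(1) by (simp add: linear_compose_sub)
next
  fix q
  obtain g c where g: "linear g" "\<And>x. F2 x q = g x + c"
    using A1[of q] unfolding affine_map_def by blast
  obtain g' c' where g': "linear g'" "\<And>x. F2 x 0 = g' x + c'"
    using A1[of 0] unfolding affine_map_def by blast
  have "(\<lambda>p. F2 p q - F2 p 0 - F2 0 q + F2 0 0) = (\<lambda>p. g p - g' p)"
    using g g' by (simp add: linear_0)
  then show "linear (\<lambda>p. F2 p q - F2 p 0 - F2 0 q + F2 0 0)"
    using g(1) g'(1) by (simp add: linear_compose_sub)
qed

lemma bil_mid:
  assumes "bilinear G"
  shows "G (p + a) (q + b) + G (p - a) (q - b) = 2 * G p q + 2 * (G a b :: real)"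
  using assms by (simp add: bilinear_ladd bilinear_radd bilinear_lsub bilinear_rsub)

lemma span_graph:
  fixes br :: "'a::euclidean_space \<Rightarrow> 'a \<Rightarrow> 'b::euclidean_space"
  assumes "step2_bracket br"
  shows "span (range (\<lambda>(x, y). (y, br x y))) = UNIV"
proof -
  let ?S = "range (\<lambda>(x, y). (y, br x y))"
  have bil: "bilinear br" using assms step2_bracket_def by blast
  have sp: "span (range (\<lambda>(x, y). br x y)) = UNIV" using assms step2_bracket_def by blast
  have y0: "(y, 0) \<in> span ?S" for y
  proof -
    have "(y, br 0 y) \<in> ?S" by auto
    then show ?thesis using bilinear_lzero[OF bil] by (simp add: span_base)
  qed
  have "(0, br x y) \<in> span ?S" for x y
  proof -
    have "(y, br x y) \<in> span ?S" by (rule span_base) auto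
    from span_diff[OF this y0[of y]] show ?thesis by simp
  qed
  then have sub: "(\<lambda>w. (0::'a, w)) ` range (\<lambda>(x, y). br x y) \<subseteq> span ?S" by auto
  have lin: "linear (\<lambda>w::'b. (0::'a, w))" by (simp add: linear_iff)
  have "(0, w) \<in> span ?S" for w
  proof -
    have "(0, w) \<in> (\<lambda>w. (0::'a, w)) ` span (range (\<lambda>(x, y). br x y))" using sp by auto
    also have "\<dots> = span ((\<lambda>w. (0::'a, w)) ` range (\<lambda>(x, y). br x y))"
      by (rule span_linear_image[OF lin, symmetric])
    also have "\<dots> \<subseteq> span ?S" using sub by (simp add: span_minimal)
    finally show ?thesis .
  qed
  then have "(y, 0) + (0, w) \<in> span ?S" for y w using y0 span_add by blast
  then show ?thesis by auto
qed

lemma linear_br: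
  assumes "step2_bracket br" shows "linear (br x)" "br x 0 = 0" "br 0 x = 0"
proof -
  have b: "bilinear br" using assms by (simp add: step2_bracket_def)
  show "linear (br x)" using b by (simp add: bilinear_def)
  show "br x 0 = 0" using b by (rule bilinear_rzero)
  show "br 0 x = 0" using b by (rule bilinear_lzero)
qed

lemma dir1:
  fixes br :: "'a::euclidean_space \<Rightarrow> 'a \<Rightarrow> 'b::euclidean_space"
    and br' :: "'c::euclidean_space \<Rightarrow> 'c \<Rightarrow> 'd::euclidean_space"
  assumes s1: "step2_bracket br" and s2: "step2_bracket br'"
    and h1: "horiz_affine br = {f. affine_map f}" and h2: "horiz_affine br' = {f. affine_map f}"
    and F: "F \<in> horiz_affine (prod_bracket br br')"
  shows "affine_map F"
proof -
  have lb: "linear (br x)" "br x 0 = 0" "br 0 x = 0" for x using linear_br[OF s1] by auto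
  have lb': "linear (br' x)" "br' x 0 = 0" "br' 0 x = 0" for x using linear_br[OF s2] by auto
  have hor: "affine_map (\<lambda>t. F (carnot_mult (prod_bracket br br') P (t *\<^sub>R Y, 0)))" for P Y
    using F unfolding horiz_affine_def by blast
  define F2 where "F2 p q = F ((fst p, fst q), (snd p, snd q))" for p :: "'a \<times> 'b" and q :: "'c \<times> 'd"
  have A1: "affine_map (\<lambda>p. F2 p q)" for q
  proof -
    have "(\<lambda>p. F2 p q) \<in> horiz_affine br"
      unfolding horiz_affine_def
    proof (intro CollectI allI)
      fix p0 :: "'a \<times> 'b" and y
      have "(\<lambda>t. F2 (carnot_mult br p0 (t *\<^sub>R y, 0)) q) =
            (\<lambda>t. F (carnot_mult (prod_bracket br br') ((fst p0, fst q), (snd p0, snd q)) (t *\<^sub>R (y, 0), 0)))"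
        by (simp add: F2_def carnot_mult_def prod_bracket_def lb')
      then show "affine_map (\<lambda>t. F2 (carnot_mult br p0 (t *\<^sub>R y, 0)) q)" by (simp only: hor)
    qed
    then show ?thesis using h1 by simp
  qed
  have A2: "affine_map (\<lambda>q. F2 p q)" for p
  proof -
    have "(\<lambda>q. F2 p q) \<in> horiz_affine br'"
      unfolding horiz_affine_def
    proof (intro CollectI allI)
      fix q0 :: "'c \<times> 'd" and y
      have "(\<lambda>t. F2 p (carnot_mult br' q0 (t *\<^sub>R y, 0))) =
            (\<lambda>t. F (carnot_mult (prod_bracket br br') ((fst p, fst q0), (snd p, snd q0)) (t *\<^sub>R (0, y), 0)))"
        by (simp add: F2_def carnot_mult_def prod_bracket_def lb)
      then show "affine_map (\<lambda>t. F2 p (carnot_mult br' q0 (t *\<^sub>R y, 0)))" by (simp only: hor)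
    qed
    then show ?thesis using h2 by simp
  qed
  define G where "G p q = F2 p q - F2 p 0 - F2 0 q + F2 0 0" for p q
  have bG: "bilinear G" unfolding G_def[abs_def] by (rule sep_bilinear[OF A1 A2])
  have key: "G (y, br x y) (y', br' x' y') = 0" for x y x' y'
  proof -
    fix z :: 'b and z' :: 'd
    define a where "a = (y, br x y)"
    define b where "b = (y', br' x' y')"
    define p0 where "p0 = (x, z)"
    define q0 where "q0 = (x', z')"
    have line: "F (carnot_mult (prod_bracket br br') ((x, x'), (z, z')) (t *\<^sub>R (y, y'), 0))
       = F2 (p0 + t *\<^sub>R a) (q0 + t *\<^sub>R b)" for t
      by (simp add: F2_def carnot_mult_def prod_bracket_def a_def b_def p0_def q0_def
          lin_scale[OF lb(1)] lin_scale[OF lb'(1)])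
    have m: "F2 (p0 + a) (q0 + b) + F2 (p0 - a) (q0 - b) = 2 * F2 p0 q0"
      using mid_affine[OF hor[of "((x, x'), (z, z'))" "(y, y')"], of 0 1] unfolding line by simp
    have m1: "F2 (p0 + a) 0 + F2 (p0 - a) 0 = 2 * F2 p0 0" by (rule mid_affine[OF A1])
    have m2: "F2 0 (q0 + b) + F2 0 (q0 - b) = 2 * F2 0 q0" by (rule mid_affine[OF A2])
    have "G (p0 + a) (q0 + b) + G (p0 - a) (q0 - b) = 2 * G p0 q0"
      using m m1 m2 unfolding G_def by simp
    then have "G a b = 0" using bil_mid[OF bG, of p0 a q0 b] by simp
    then show ?thesis by (simp add: a_def b_def)
  qed
  have bz: "bilinear (\<lambda>(p::'a \<times> 'b) (q::'c \<times> 'd). 0::real)"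
    by (simp add: bilinear_def linear_zero)
  have G0: "G p q = 0" for p q
  proof -
    have "G p q = (\<lambda>p q. 0) p q"
    proof (rule bilinear_eq[OF bG bz, where S=UNIV and T=UNIV and B="range (\<lambda>(x, y). (y, br x y))"
          and C="range (\<lambda>(x, y). (y, br' x y))"])
      show "UNIV \<subseteq> span (range (\<lambda>(x, y). (y, br x y)))" using span_graph[OF s1] by simp
      show "UNIV \<subseteq> span (range (\<lambda>(x, y). (y, br' x y)))" using span_graph[OF s2] by simp
      fix u v assume "u \<in> range (\<lambda>(x, y). (y, br x y))" "v \<in> range (\<lambda>(x, y). (y, br' x y))"
      then obtain x y x' y' where "u = (y, br x y)" "v = (y', br' x' y')" by auto
      then show "G u v = 0" using key by simp
    qed simp_all
    then show ?thesis by simp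
  qed
  obtain g1 c1 where g1: "linear g1" "\<And>p. F2 p 0 = g1 p + c1"
    using A1[of 0] unfolding affine_map_def by blast
  obtain g2 c2 where g2: "linear g2" "\<And>q. F2 0 q = g2 q + c2"
    using A2[of 0] unfolding affine_map_def by blast
  have l1: "linear (\<lambda>P::('a \<times> 'c) \<times> ('b \<times> 'd). (fst (fst P), fst (snd P)))"
    by (simp add: linear_iff)
  have l2: "linear (\<lambda>P::('a \<times> 'c) \<times> ('b \<times> 'd). (snd (fst P), snd (snd P)))"
    by (simp add: linear_iff)
  have lin: "linear (\<lambda>P. g1 (fst (fst P), fst (snd P)) + g2 (snd (fst P), snd (snd P)))"
    by (intro linear_compose_add linear_compose[OF l1 g1(1), unfolded o_def]
        linear_compose[OF l2 g2(1), unfolded o_def])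
  have "F P = g1 (fst (fst P), fst (snd P)) + g2 (snd (fst P), snd (snd P)) + (c1 + c2 - F2 0 0)" for P
  proof -
    have "F P = F2 (fst (fst P), fst (snd P)) (snd (fst P), snd (snd P))"
      by (simp add: F2_def)
    also have "\<dots> = F2 (fst (fst P), fst (snd P)) 0 + F2 0 (snd (fst P), snd (snd P)) - F2 0 0"
      using G0[of "(fst (fst P), fst (snd P))" "(snd (fst P), snd (snd P))"] unfolding G_def by simp
    finally show ?thesis using g1 g2 by simp
  qed
  then show ?thesis unfolding affine_map_def using lin by blast
qed


lemma dir2a:
  fixes br :: "'a::euclidean_space \<Rightarrow> 'a \<Rightarrow> 'b::euclidean_space"
    and br' :: "'c::euclidean_space \<Rightarrow> 'c \<Rightarrow> 'd::euclidean_space"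
  assumes hp: "horiz_affine (prod_bracket br br') = {f. affine_map f}"
    and f: "f \<in> horiz_affine br"
  shows "affine_map f"
proof -
  define F where "F P = f (fst (fst P), fst (snd P))" for P :: "('a \<times> 'c) \<times> ('b \<times> 'd)"
  have "F \<in> horiz_affine (prod_bracket br br')"
    unfolding horiz_affine_def
  proof (intro CollectI allI)
    fix P :: "('a \<times> 'c) \<times> ('b \<times> 'd)" and Y :: "'a \<times> 'c"
    have e: "(\<lambda>t. F (carnot_mult (prod_bracket br br') P (t *\<^sub>R Y, 0))) =
          (\<lambda>t. f (carnot_mult br (fst (fst P), fst (snd P)) (t *\<^sub>R fst Y, 0)))"
      by (simp add: F_def carnot_mult_def prod_bracket_def)
    show "affine_map (\<lambda>t. F (carnot_mult (prod_bracket br br') P (t *\<^sub>R Y, 0)))"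
      unfolding e using f unfolding horiz_affine_def by blast
  qed
  then have "affine_map F" using hp by simp
  then obtain g c where g: "linear g" "\<And>x. F x = g x + c" unfolding affine_map_def by blast
  have l: "linear (\<lambda>p::'a \<times> 'b. ((fst p, 0::'c), (snd p, 0::'d)))" by (simp add: linear_iff)
  have "f p = g ((fst p, 0), (snd p, 0)) + c" for p
    using g(2)[of "((fst p, 0), (snd p, 0))"] by (simp add: F_def)
  then show ?thesis unfolding affine_map_def
    using linear_compose[OF l g(1), unfolded o_def] by blast
qed

lemma dir2b:
  fixes br :: "'a::euclidean_space \<Rightarrow> 'a \<Rightarrow> 'b::euclidean_space"
    and br' :: "'c::euclidean_space \<Rightarrow> 'c \<Rightarrow> 'd::euclidean_space"
  assumes hp: "horiz_affine (prod_bracket br br') = {f. affine_map f}"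
    and f: "f \<in> horiz_affine br'"
  shows "affine_map f"
proof -
  define F where "F P = f (snd (fst P), snd (snd P))" for P :: "('a \<times> 'c) \<times> ('b \<times> 'd)"
  have "F \<in> horiz_affine (prod_bracket br br')"
    unfolding horiz_affine_def
  proof (intro CollectI allI)
    fix P :: "('a \<times> 'c) \<times> ('b \<times> 'd)" and Y :: "'a \<times> 'c"
    have e: "(\<lambda>t. F (carnot_mult (prod_bracket br br') P (t *\<^sub>R Y, 0))) =
          (\<lambda>t. f (carnot_mult br' (snd (fst P), snd (snd P)) (t *\<^sub>R snd Y, 0)))"
      by (simp add: F_def carnot_mult_def prod_bracket_def)
    show "affine_map (\<lambda>t. F (carnot_mult (prod_bracket br br') P (t *\<^sub>R Y, 0)))"
      unfolding e using f unfolding horiz_affine_def by blast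
  qed
  then have "affine_map F" using hp by simp
  then obtain g c where g: "linear g" "\<And>x. F x = g x + c" unfolding affine_map_def by blast
  have l: "linear (\<lambda>p::'c \<times> 'd. ((0::'a, fst p), (0::'b, snd p)))" by (simp add: linear_iff)
  have "f p = g ((0, fst p), (0, snd p)) + c" for p
    using g(2)[of "((0, fst p), (0, snd p))"] by (simp add: F_def)
  then show ?thesis unfolding affine_map_def
    using linear_compose[OF l g(1), unfolded o_def] by blast
qed

theorem proposition6p4:
  fixes br :: "'a::euclidean_space \<Rightarrow> 'a \<Rightarrow> 'b::euclidean_space"
    and br' :: "'c::euclidean_space \<Rightarrow> 'c \<Rightarrow> 'd::euclidean_space"
  assumes "step2_bracket br" and "step2_bracket br'"
  shows "(horiz_affine br = {f. affine_map f} \<and> horiz_affine br' = {f. affine_map f})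
     \<longleftrightarrow> horiz_affine (prod_bracket br br') = {f. affine_map f}"
proof -
  have lb: "linear (br x)" for x using linear_br[OF assms(1)] by auto
  have lb': "linear (br' x)" for x using linear_br[OF assms(2)] by auto
  have lp: "linear (prod_bracket br br' u)" for u
    unfolding prod_bracket_def linear_iff
    by (simp add: lin_add[OF lb] lin_add[OF lb'] lin_scale[OF lb] lin_scale[OF lb'])
  have i1: "{f. affine_map f} \<subseteq> horiz_affine br" using affine_imp_horiz[of br] lb by blast
  have i2: "{f. affine_map f} \<subseteq> horiz_affine br'" using affine_imp_horiz[of br'] lb' by blast
  have i3: "{f. affine_map f} \<subseteq> horiz_affine (prod_bracket br br')"
    using affine_imp_horiz[of "prod_bracket br br'"] lp by blast
  show ?thesis
  proof
    assume h: "horiz_affine br = {f. affine_map f} \<and> horiz_affine br' = {f. affine_map f}"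
    show "horiz_affine (prod_bracket br br') = {f. affine_map f}"
      using dir1[OF assms h[THEN conjunct1] h[THEN conjunct2]] i3 by blast
  next
    assume h: "horiz_affine (prod_bracket br br') = {f. affine_map f}"
    show "horiz_affine br = {f. affine_map f} \<and> horiz_affine br' = {f. affine_map f}"
      using dir2a[OF h] dir2b[OF h] i1 i2 by blast
  qed
qed

end
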